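(* For a locally compact metrizable topological group $G$, $G$ is NSS if and only if $G$ is TAP.
   Context: $e$ is the neutral element; $\prod_{k=1}^n a_k=a_1\cdots a_n$. $G$ is NSS if some neighborhood of $e$ contains no nontrivial subgroup of $G$. A sequence $(g_n)$ in $G$ is hyper-multipliable if for every integer sequence $(m_n)$ the sequence $\left(\prod_{k=1}^n g_k^{m_k}\right)_n$ converges in $G$. A subset $A\subset G$ is absolutely productive if every sequence of pairwise distinct elements of $A$ is hyper-multipliable. $G$ is TAP if every absolutely productive subset of $G$ is finite. *)

theory Defs
  imports "HOL-Analysis.Analysis"
begin

text \<open>Groups are written additively (class group_add, which is NOT assumed commutative):
  the group product a b is a + b, the neutral element e is 0, and g^m (m integer) is zpow m g.\<close>

definition npow :: "nat \<Rightarrow> 'a::monoid_add \<Rightarrow> 'a" where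
  "npow n g = (((+) g) ^^ n) 0"

definition zpow :: "int \<Rightarrow> 'a::group_add \<Rightarrow> 'a" where
  "zpow m g = (if 0 \<le> m then npow (nat m) g else - npow (nat (- m)) g)"

primrec oprod :: "(nat \<Rightarrow> 'a::monoid_add) \<Rightarrow> nat \<Rightarrow> 'a" where
  "oprod f 0 = 0"
| "oprod f (Suc n) = oprod f n + f n"

definition is_subgroup :: "'a::group_add set \<Rightarrow> bool" where
  "is_subgroup H \<longleftrightarrow> 0 \<in> H \<and> (\<forall>x\<in>H. \<forall>y\<in>H. x + y \<in> H) \<and> (\<forall>x\<in>H. - x \<in> H)"

definition NSS :: "'a::{topological_space, group_add} itself \<Rightarrow> bool" where
  "NSS _ \<longleftrightarrow> (\<exists>U::'a set. open U \<and> 0 \<in> U \<and>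
      (\<forall>H. is_subgroup H \<and> H \<subseteq> U \<longrightarrow> H = {0}))"

definition hyper_multipliable :: "(nat \<Rightarrow> 'a::{topological_space, group_add}) \<Rightarrow> bool" where
  "hyper_multipliable g \<longleftrightarrow>
     (\<forall>m :: nat \<Rightarrow> int. convergent (\<lambda>n. oprod (\<lambda>k. zpow (m k) (g k)) n))"

definition absolutely_productive :: "'a::{topological_space, group_add} set \<Rightarrow> bool" where
  "absolutely_productive A \<longleftrightarrow>
     (\<forall>g :: nat \<Rightarrow> 'a. inj g \<and> range g \<subseteq> A \<longrightarrow> hyper_multipliable g)"

definition TAP :: "'a::{topological_space, group_add} itself \<Rightarrow> bool" where
  "TAP _ \<longleftrightarrow> (\<forall>A::'a set. absolutely_productive A \<longrightarrow> finite A)"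

end

theory Submission imports Defs begin

lemma npow_Suc: "npow (Suc n) g = g + npow n g"
  by (simp add: npow_def)
lemma npow_0[simp]: "npow 0 g = 0" by (simp add: npow_def)

lemma npow_Suc': "npow (Suc n) (g::'a::group_add) = npow n g + g"
proof (induction n)
  case 0 thus ?case by (simp add: npow_Suc)
next
  case (Suc n)
  have "npow (Suc (Suc n)) g = g + (npow n g + g)" using Suc by (simp add: npow_Suc)
  also have "\<dots> = npow (Suc n) g + g" by (simp add: npow_Suc add.assoc)
  finally show ?case .
qed

lemma comm_minus: "(x::'a::group_add) + y = y + x \<Longrightarrow> x + - y = - y + x"
proof -
  assume h: "x + y = y + x"
  have "x + - y = - y + (y + x) + - y" by simp
  also have "\<dots> = - y + (x + y) + - y" by (simp only: h)
  also have "\<dots> = - y + x" by (simp only: add.assoc right_minus add_0_right)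
  finally show ?thesis .
qed

lemma npow_add: "npow (a + b) (g::'a::group_add) = npow a g + npow b g"
  by (induction a) (simp_all add: npow_Suc add.assoc)

lemma npow_comm: "npow a (g::'a::group_add) + npow b g = npow b g + npow a g"
proof -
  have "npow (a + b) g = npow (b + a) g" by (simp add: add.commute)
  thus ?thesis by (simp only: npow_add)
qed

definition cyc :: "'a::group_add \<Rightarrow> 'a set" where
  "cyc g = {x. \<exists>n. x = npow n g \<or> x = - npow n g}"

lemma cyc_zpow: "x \<in> cyc g \<Longrightarrow> \<exists>m. x = zpow m g"
  unfolding cyc_def zpow_def
  apply clarify
  apply (erule disjE)
   apply (rule_tac x="int n" in exI, simp)
  apply (case_tac "n = 0")
   apply (rule_tac x=0 in exI, simp)
  apply (rule_tac x="- int n" in exI, simp)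
  done

lemma cyc_add:
  assumes "x \<in> cyc g" "y \<in> cyc g" shows "x + y \<in> cyc (g::'a::group_add)"
proof -
  have nn: "npow a g + - npow b g \<in> cyc g" for a b
  proof (cases "b \<le> a")
    case True
    define c where "c = a - b"
    have c: "a = c + b" using True unfolding c_def by simp
    have "npow a g + - npow b g = npow c g" unfolding c npow_add by (simp add: add.assoc)
    thus ?thesis unfolding cyc_def by blast
  next
    case False
    define c where "c = b - a"
    have c: "b = a + c" using False unfolding c_def by simp
    have cm: "npow a g + - npow c g = - npow c g + npow a g" by (rule comm_minus[OF npow_comm])
    have "npow a g + - npow b g = npow a g + (- npow c g + - npow a g)"
      unfolding c npow_add minus_add ..
    also have "\<dots> = (npow a g + - npow c g) + - npow a g" by (simp only: add.assoc)
    also have "\<dots> = (- npow c g + npow a g) + - npow a g" by (simp only: cm)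
    also have "\<dots> = - npow c g" by (simp only: add.assoc right_minus add_0_right)
    finally have "npow a g + - npow b g = - npow c g" .
    thus ?thesis unfolding cyc_def by blast
  qed
  have nn2: "- npow a g + npow b g \<in> cyc g" for a b
  proof -
    have "npow b g + - npow a g = - npow a g + npow b g" by (rule comm_minus[OF npow_comm])
    thus ?thesis using nn[of b a] by simp
  qed
  from assms obtain a b where
    "(x = npow a g \<or> x = - npow a g)" "(y = npow b g \<or> y = - npow b g)"
    unfolding cyc_def by blast
  then show ?thesis
  proof (elim disjE)
    assume "x = npow a g" "y = npow b g"
    hence "x + y = npow (a + b) g" by (simp add: npow_add)
    thus ?thesis unfolding cyc_def by blast
  next
    assume "x = npow a g" "y = - npow b g"
    thus ?thesis using nn by simp
  next
    assume "x = - npow a g" "y = npow b g"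
    thus ?thesis using nn2 by simp
  next
    assume "x = - npow a g" "y = - npow b g"
    hence "x + y = - npow (b + a) g" by (simp only: npow_add minus_add)
    thus ?thesis unfolding cyc_def by blast
  qed
qed

lemma cyc_subgroup: "is_subgroup (cyc g)"
  unfolding is_subgroup_def
proof (intro conjI ballI)
  show "0 \<in> cyc g" unfolding cyc_def by (rule CollectI, rule exI[of _ 0], simp)
  show "x + y \<in> cyc g" if "x \<in> cyc g" "y \<in> cyc g" for x y using that cyc_add by blast
  show "- x \<in> cyc g" if "x \<in> cyc g" for x
  proof -
    from that obtain n where "x = npow n g \<or> x = - npow n g" unfolding cyc_def by blast
    thus ?thesis unfolding cyc_def by auto
  qed
qed

lemma g_in_cyc: "g \<in> cyc g"
  unfolding cyc_def by (rule CollectI, rule exI[of _ 1], simp add: npow_Suc)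

lemma npow_in_subgroup: "is_subgroup H \<Longrightarrow> g \<in> H \<Longrightarrow> npow n g \<in> H"
  by (induction n) (auto simp: is_subgroup_def npow_Suc)

lemma zpow_in_subgroup: "is_subgroup H \<Longrightarrow> g \<in> H \<Longrightarrow> zpow m g \<in> H"
  unfolding zpow_def using npow_in_subgroup by (auto simp: is_subgroup_def)


lemma pair_nbhd:
  fixes f :: "'a::topological_space \<times> 'a \<Rightarrow> 'b::topological_space"
  assumes "(f \<longlongrightarrow> c) (nhds (a, a))" "open W" "c \<in> W"
  shows "\<exists>V. open V \<and> a \<in> V \<and> (\<forall>x\<in>V. \<forall>y\<in>V. f (x, y) \<in> W)"
proof -
  have "eventually (\<lambda>p. f p \<in> W) (nhds (a, a))"
    by (rule topological_tendstoD[OF assms])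
  hence "eventually (\<lambda>p. f p \<in> W) (nhds a \<times>\<^sub>F nhds a)" by (simp only: nhds_prod)
  then obtain Q where Q: "eventually Q (nhds a)" "\<And>x y. Q x \<Longrightarrow> Q y \<Longrightarrow> f (x, y) \<in> W"
    unfolding eventually_prod_same by blast
  from Q(1) obtain S where S: "open S" "a \<in> S" "\<And>x. x \<in> S \<Longrightarrow> Q x"
    unfolding eventually_nhds by blast
  show ?thesis
  proof (intro exI conjI ballI)
    show "open S" "a \<in> S" by (fact S(1), fact S(2))
    fix x y assume "x \<in> S" "y \<in> S"
    thus "f (x, y) \<in> W" using Q(2) S(3) by blast
  qed
qed

lemma id_nhds: "((\<lambda>x. x) \<longlongrightarrow> a) (nhds a)"
  by (rule filterlim_ident)

lemma add_nbhd:
  fixes W :: "'a::topological_group_add set"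
  assumes "open W" "0 \<in> W"
  shows "\<exists>V. open V \<and> 0 \<in> V \<and> (\<forall>x\<in>V. \<forall>y\<in>V. x + y \<in> W)"
proof -
  have "((\<lambda>p::'a\<times>'a. fst p + snd p) \<longlongrightarrow> fst (0::'a,0::'a) + snd (0::'a,0::'a)) (nhds (0, 0))"
    by (intro tendsto_add tendsto_fst tendsto_snd id_nhds)
  hence "((\<lambda>p::'a\<times>'a. fst p + snd p) \<longlongrightarrow> 0) (nhds (0, 0))" by simp
  from pair_nbhd[OF this assms] show ?thesis by simp
qed

lemma dif_nbhd:
  fixes W :: "'a::topological_group_add set"
  assumes "open W" "0 \<in> W"
  shows "\<exists>V. open V \<and> 0 \<in> V \<and> (\<forall>x\<in>V. \<forall>y\<in>V. - x + y \<in> W)"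
proof -
  have "((\<lambda>p::'a\<times>'a. - fst p + snd p) \<longlongrightarrow> - fst (0::'a,0::'a) + snd (0::'a,0::'a)) (nhds (0, 0))"
    by (intro tendsto_add tendsto_minus tendsto_fst tendsto_snd id_nhds)
  hence "((\<lambda>p::'a\<times>'a. - fst p + snd p) \<longlongrightarrow> 0) (nhds (0, 0))" by simp
  from pair_nbhd[OF this assms] show ?thesis by simp
qed

lemma good_nbhd:
  fixes W :: "'a::{topological_group_add, metric_space} set"
  assumes "open W" "0 \<in> W" "r > 0"
  shows "\<exists>V. open V \<and> 0 \<in> V \<and> V \<subseteq> W \<and> (\<forall>x\<in>V. \<forall>y\<in>V. \<forall>z\<in>V. x + y + z \<in> W)
     \<and> (\<forall>x\<in>V. \<forall>y\<in>V. dist (- x + y) 0 < r)"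
proof -
  obtain V1 where V1: "open V1" "0 \<in> V1" "\<forall>x\<in>V1. \<forall>y\<in>V1. x + y \<in> W"
    using add_nbhd[OF assms(1,2)] by blast
  obtain V2 where V2: "open V2" "0 \<in> V2" "\<forall>x\<in>V2. \<forall>y\<in>V2. x + y \<in> V1"
    using add_nbhd[OF V1(1,2)] by blast
  obtain V3 :: "'a set" where V3: "open V3" "0 \<in> V3" "\<forall>x\<in>V3. \<forall>y\<in>V3. - x + y \<in> ball 0 r"
    using dif_nbhd[OF open_ball centre_in_ball[THEN iffD2, OF assms(3)]] by blast
  let ?V = "V1 \<inter> V2 \<inter> V3 \<inter> W"
  have f1: "open ?V" using V1(1) V2(1) V3(1) assms(1) by (intro open_Int)
  have f2: "0 \<in> ?V" using V1(2) V2(2) V3(2) assms(2) by simp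
  have f3: "\<forall>x\<in>?V. \<forall>y\<in>?V. \<forall>z\<in>?V. x + y + z \<in> W"
  proof (intro ballI)
    fix x y z assume "x \<in> ?V" "y \<in> ?V" "z \<in> ?V"
    hence "x \<in> V2" "y \<in> V2" "z \<in> V1" by simp_all
    hence "x + y \<in> V1" "z \<in> V1" using V2(3) by simp_all
    thus "x + y + z \<in> W" using V1(3) by blast
  qed
  have f4: "\<forall>x\<in>?V. \<forall>y\<in>?V. dist (- x + y) 0 < r"
  proof (intro ballI)
    fix x y assume "x \<in> ?V" "y \<in> ?V"
    hence "x \<in> V3" "y \<in> V3" by simp_all
    hence "- x + y \<in> ball 0 r" using V3(3) by blast
    hence "dist 0 (- x + y) < r" by simp
    thus "dist (- x + y) 0 < r" by (simp only: dist_commute)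
  qed
  have f5: "?V \<subseteq> W" by (rule Int_lower2)
  show ?thesis by (rule exI[of _ ?V], intro conjI; fact)
qed

lemma oprod_add: "oprod f (a + n) = oprod f a + oprod (\<lambda>i. f (a + i)) n"
  by (induction n) (simp_all add: add.assoc)

lemma block:
  fixes U :: "nat \<Rightarrow> 'a::group_add set" and t :: "nat \<Rightarrow> 'a" and j :: "nat \<Rightarrow> nat"
  assumes U0: "\<And>n. 0 \<in> U n"
    and U3: "\<And>n x y z. x \<in> U (Suc n) \<Longrightarrow> y \<in> U (Suc n) \<Longrightarrow> z \<in> U (Suc n) \<Longrightarrow> x + y + z \<in> U n"
    and inj: "inj j" and t: "\<And>k. t k \<in> U (j k)"
  shows "(\<forall>k. a \<le> k \<and> k < a + n \<longrightarrow> M < j k) \<Longrightarrow> oprod (\<lambda>i. t (a + i)) n \<in> U M"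
proof (induction n arbitrary: a M rule: less_induct)
  case (less n)
  have sub1: "U (Suc b) \<subseteq> U b" for b
  proof
    fix x assume "x \<in> U (Suc b)"
    from U3[OF this U0 U0] show "x \<in> U b" by simp
  qed
  have dec: "U (b + d) \<subseteq> U b" for b d
    by (induction d) (use sub1 in force)+
  show ?case
  proof (cases "n = 0")
    case True thus ?thesis by (simp add: U0)
  next
    case False
    let ?S = "{a..<a+n}"
    have fin: "finite (j ` ?S)" and ne: "j ` ?S \<noteq> {}" using False by auto
    define m where "m = Min (j ` ?S)"
    obtain p where p0: "Min (j ` ?S) = j p" "p \<in> ?S" using Min_in[OF fin ne] by (rule imageE)
    have p: "p \<in> ?S" "j p = m" using p0 unfolding m_def by simp_all
    have mle: "\<forall>k\<in>?S. m \<le> j k" using Min_le[OF fin] unfolding m_def by blast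
    have Mm: "M < m" using less.prems p by auto
    have gt: "m < j k" if "k \<in> ?S" "k \<noteq> p" for k
    proof -
      have "j k \<noteq> j p" using that(2) inj by (auto dest: injD)
      moreover have "m \<le> j k" using mle that(1) by blast
      ultimately show ?thesis using p(2) by simp
    qed
    define n1 where "n1 = p - a"
    define n2 where "n2 = n - n1 - 1"
    have pn: "p = a + n1" "n = n1 + Suc n2" using p unfolding n1_def n2_def by auto
    have eq: "oprod (\<lambda>i. t (a+i)) n = oprod (\<lambda>i. t (a+i)) n1 + t p + oprod (\<lambda>i. t (Suc p + i)) n2"
    proof -
      have "oprod (\<lambda>i. t (a+i)) n = oprod (\<lambda>i. t (a+i)) n1 + oprod (\<lambda>i. t (a + (n1 + i))) (1 + n2)"
        unfolding pn(2) using oprod_add[of "\<lambda>i. t (a+i)" n1 "Suc n2"] by simp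
      also have "oprod (\<lambda>i. t (a + (n1 + i))) (1 + n2) = t p + oprod (\<lambda>i. t (Suc p + i)) n2"
        unfolding oprod_add[of "\<lambda>i. t (a + (n1 + i))" 1 n2] using pn(1) by (simp add: add_ac)
      finally show ?thesis by (simp add: add.assoc)
    qed
    have L: "oprod (\<lambda>i. t (a+i)) n1 \<in> U m"
      using less.IH[of n1 a m] pn gt by auto
    have R: "oprod (\<lambda>i. t (Suc p + i)) n2 \<in> U m"
      using less.IH[of n2 "Suc p" m] pn gt by auto
    have P: "t p \<in> U m" using t[of p] p(2) by simp
    define m' where "m' = m - 1"
    have m': "m = Suc m'" "M \<le> m'" using Mm unfolding m'_def by auto
    have "oprod (\<lambda>i. t (a+i)) n \<in> U m'" unfolding eq using U3[of _ m'] L R P m' by simp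
    moreover have "U m' \<subseteq> U M" using dec[of M "m' - M"] m' by simp
    ultimately show ?thesis by blast
  qed
qed


lemma core:
  fixes U :: "nat \<Rightarrow> 'a::{topological_group_add, metric_space} set" and t :: "nat \<Rightarrow> 'a" and j :: "nat \<Rightarrow> nat"
  assumes U0: "\<And>n. 0 \<in> U n"
    and U3: "\<And>n x y z. x \<in> U (Suc n) \<Longrightarrow> y \<in> U (Suc n) \<Longrightarrow> z \<in> U (Suc n) \<Longrightarrow> x + y + z \<in> U n"
    and Ud: "\<And>n x y. x \<in> U n \<Longrightarrow> y \<in> U n \<Longrightarrow> dist (- x + y) 0 < 1 / real (Suc n)"
    and K: "compact K" "U 0 \<subseteq> K"
    and inj: "inj j" and t: "\<And>k. t k \<in> U (j k)"
  shows "convergent (oprod t)"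
proof -
  define s where "s = oprod t"
  have ex: "\<forall>M. \<exists>N. \<forall>k\<ge>N. M < j k"
  proof
    fix M
    have "finite (j -` {..M})" by (rule finite_vimageI[OF _ inj]) simp
    then obtain N where "j -` {..M} \<subseteq> {..<N}" using finite_nat_bounded by blast
    hence "\<forall>k\<ge>N. M < j k" by (auto simp: subset_eq not_le[symmetric])
    thus "\<exists>N. \<forall>k\<ge>N. M < j k" by blast
  qed
  from choice[OF ex] obtain NN where NN0: "\<forall>M. \<forall>k\<ge>NN M. M < j k" by blast
  have NN: "M < j k" if "NN M \<le> k" for M k using NN0 that by blast
  have seg: "\<exists>u\<in>U M. s N = s (NN M) + u" if "NN M \<le> N" for M N
  proof -
    define d where "d = N - NN M"
    have d: "N = NN M + d" using that unfolding d_def by simp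
    have "oprod (\<lambda>i. t (NN M + i)) d \<in> U M"
      using block[where U=U and t=t and j=j and a="NN M" and n=d and M=M, OF U0 U3 inj t] NN by auto
    moreover have "s N = s (NN M) + oprod (\<lambda>i. t (NN M + i)) d"
      unfolding s_def d by (rule oprod_add)
    ultimately show ?thesis by blast
  qed
  define N0 where "N0 = NN 0"
  define f where "f i = s (N0 + i)" for i
  define C where "C = (\<lambda>x. s N0 + x) ` K"
  have "compact C" unfolding C_def
    by (rule compact_continuous_image[OF _ K(1)]) (intro continuous_intros)
  moreover have "\<forall>i. f i \<in> C"
  proof
    fix i
    obtain u where "u \<in> U 0" "s (N0 + i) = s N0 + u" using seg[of 0 "N0 + i"] N0_def by auto
    thus "f i \<in> C" unfolding f_def C_def using K(2) by auto
  qed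
  ultimately obtain L r where r: "strict_mono r" "(f \<circ> r) \<longlonglongrightarrow> L"
    using compact_imp_seq_compact unfolding seq_compact_def by blast
  have key: "dist (- s N + L) 0 \<le> 1 / real (Suc M)" if hN: "NN M \<le> N" for M N
  proof -
    obtain u where u: "u \<in> U M" "s N = s (NN M) + u" using seg[OF hN] by blast
    have lim: "(\<lambda>i. - s N + f (r i)) \<longlonglongrightarrow> - s N + L"
      using r(2) unfolding o_def by (intro tendsto_add tendsto_const)
    have "\<forall>i\<ge>NN M. dist (- s N + f (r i)) 0 \<le> 1 / real (Suc M)"
    proof (intro allI impI)
      fix i assume "NN M \<le> i"
      hence "NN M \<le> N0 + r i" using seq_suble[OF r(1), of i] by linarith
      from seg[OF this] obtain v where v: "v \<in> U M" "s (N0 + r i) = s (NN M) + v" by blast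
      have "- s N + f (r i) = - u + v"
        unfolding f_def u(2) v(2) by (simp only: minus_add add.assoc minus_add_cancel)
      thus "dist (- s N + f (r i)) 0 \<le> 1 / real (Suc M)" using Ud[OF u(1) v(1)] by simp
    qed
    thus ?thesis by (intro LIMSEQ_le_const2[OF tendsto_dist[OF lim tendsto_const]]) blast
  qed
  have "(\<lambda>N. - s N + L) \<longlonglongrightarrow> 0"
    unfolding lim_sequentially
  proof (intro allI impI)
    fix e :: real assume "e > 0"
    then obtain n where n: "n > 0" "inverse (real n) < e" using ex_inverse_of_nat_less by blast
    have e: "1 / real (Suc (n - 1)) < e" using n by (simp add: divide_inverse)
    show "\<exists>no. \<forall>N\<ge>no. dist (- s N + L) 0 < e"
    proof (intro exI allI impI)
      fix N assume "NN (n - 1) \<le> N"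
      from key[OF this] e show "dist (- s N + L) 0 < e" by linarith
    qed
  qed
  hence "(\<lambda>N. L + - (- s N + L)) \<longlonglongrightarrow> L + - 0"
    by (intro tendsto_add tendsto_const tendsto_minus)
  moreover have "L + - (- s N + L) = s N" for N by (simp only: minus_add minus_minus add_minus_cancel)
  ultimately have "s \<longlonglongrightarrow> L" by simp
  thus ?thesis unfolding s_def convergent_def by blast
qed


lemma nss_tap:
  assumes "NSS TYPE('a::{topological_group_add, metric_space})"
  shows "TAP TYPE('a)"
proof -
  obtain U :: "'a set" where U: "open U" "0 \<in> U" "\<And>H. is_subgroup H \<Longrightarrow> H \<subseteq> U \<Longrightarrow> H = {0}"
    using assms unfolding NSS_def by blast
  show ?thesis unfolding TAP_def
  proof (intro allI impI)
    fix A :: "'a set" assume ap: "absolutely_productive A"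
    show "finite A"
    proof (rule ccontr)
      assume "infinite A"
      then obtain g :: "nat \<Rightarrow> 'a" where g: "inj g" "range g \<subseteq> A"
        using infinite_countable_subset by blast
      have "\<exists>m. g k \<noteq> 0 \<longrightarrow> zpow m (g k) \<notin> U" for k
      proof (cases "g k = 0")
        case False
        have "\<not> cyc (g k) \<subseteq> U"
        proof
          assume "cyc (g k) \<subseteq> U"
          hence "cyc (g k) = {0}" using U(3) cyc_subgroup by blast
          thus False using g_in_cyc[of "g k"] False by simp
        qed
        then obtain x where "x \<in> cyc (g k)" "x \<notin> U" by blast
        thus ?thesis using cyc_zpow by blast
      qed simp
      hence "\<forall>k. \<exists>m. g k \<noteq> 0 \<longrightarrow> zpow m (g k) \<notin> U" by blast
      from choice[OF this] obtain mm where mm0: "\<forall>k. g k \<noteq> 0 \<longrightarrow> zpow (mm k) (g k) \<notin> U" by blast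
      have mm: "zpow (mm k) (g k) \<notin> U" if "g k \<noteq> 0" for k using mm0 that by blast
      define s where "s = oprod (\<lambda>k. zpow (mm k) (g k))"
      have "convergent s" using ap g unfolding absolutely_productive_def hyper_multipliable_def s_def by blast
      then obtain L where L: "s \<longlonglongrightarrow> L" unfolding convergent_def by blast
      have "(\<lambda>n. - s n + s (Suc n)) \<longlonglongrightarrow> - L + L"
        by (intro tendsto_add tendsto_minus L LIMSEQ_Suc)
      moreover have "- s n + s (Suc n) = zpow (mm n) (g n)" for n
        unfolding s_def by (simp add: add.assoc[symmetric])
      ultimately have "(\<lambda>n. zpow (mm n) (g n)) \<longlonglongrightarrow> 0" by simp
      from topological_tendstoD[OF this U(1,2)]
      obtain N where N: "\<And>n. n \<ge> N \<Longrightarrow> zpow (mm n) (g n) \<in> U"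
        unfolding eventually_sequentially by blast
      have "g N \<noteq> g (Suc N)" using g(1) by (auto dest: injD)
      hence "g N \<noteq> 0 \<or> g (Suc N) \<noteq> 0" by auto
      thus False using N[of N] N[of "Suc N"] mm by auto
    qed
  qed
qed


lemma tap_nss:
  assumes lc: "locally_compact_space (euclidean :: 'a::{topological_group_add, metric_space} topology)"
    and tap: "TAP TYPE('a)"
  shows "NSS TYPE('a)"
proof (rule ccontr)
  assume nn: "\<not> NSS TYPE('a)"
  have sg: "\<exists>H. is_subgroup H \<and> H \<subseteq> W \<and> H \<noteq> {0}" if "open W" "0 \<in> W" for W :: "'a set"
    using nn that unfolding NSS_def by blast
  from lc have "\<exists>U. open U \<and> (\<exists>K. compact K \<and> (0::'a) \<in> U \<and> U \<subseteq> K)"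
    unfolding locally_compact_space_def by simp
  then obtain V K :: "'a set" where VK: "open V" "compact K" "0 \<in> V" "V \<subseteq> K"
    by blast
  define P where "P = (\<lambda>(X::'a set) (W::'a set) (r::real). open X \<and> 0 \<in> X \<and> X \<subseteq> W \<and>
      (\<forall>x\<in>X. \<forall>y\<in>X. \<forall>z\<in>X. x + y + z \<in> W) \<and> (\<forall>x\<in>X. \<forall>y\<in>X. dist (- x + y) 0 < r))"
  define G where "G W r = (SOME X. P X W r)" for W r
  have GP: "P (G W r) W r" if "open W" "0 \<in> W" "r > 0" for W r
    unfolding G_def by (rule someI_ex) (use good_nbhd[OF that] in \<open>simp add: P_def\<close>)
  define U where "U n = rec_nat (G V 1) (\<lambda>n W. G W (1 / real (Suc (Suc n)))) n" for n
  have U_0: "U 0 = G V 1" and U_Suc: "U (Suc n) = G (U n) (1 / real (Suc (Suc n)))" for n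
    unfolding U_def by simp_all
  have UP: "P (U n) (if n = 0 then V else U (n - 1)) (1 / real (Suc n))" for n
  proof (induction n)
    case 0 thus ?case using GP[OF VK(1,3)] U_0 by simp
  next
    case (Suc n)
    hence "open (U n)" "0 \<in> U n" unfolding P_def by auto
    from GP[OF this, of "1 / real (Suc (Suc n))"] show ?case by (simp add: U_Suc)
  qed
  have U0: "\<And>n. 0 \<in> U n" using UP unfolding P_def by blast
  have Uo: "\<And>n. open (U n)" using UP unfolding P_def by blast
  have U3: "x + y + z \<in> U n" if "x \<in> U (Suc n)" "y \<in> U (Suc n)" "z \<in> U (Suc n)" for n x y z
    using UP[of "Suc n"] that unfolding P_def by simp
  have Ud: "dist (- x + y) 0 < 1 / real (Suc n)" if "x \<in> U n" "y \<in> U n" for n x y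
    using UP[of n] that unfolding P_def by blast
  have "U 0 \<subseteq> V" using UP[of 0] unfolding P_def by simp
  hence UK: "U 0 \<subseteq> K" using VK(4) by (rule subset_trans)
  have "\<exists>H h. is_subgroup H \<and> H \<subseteq> U n \<and> h \<in> H \<and> h \<noteq> 0" for n
  proof -
    obtain H0 where H0: "is_subgroup H0" "H0 \<subseteq> U n" "H0 \<noteq> {0}" using sg[OF Uo U0, of n] by blast
    hence "0 \<in> H0" by (simp add: is_subgroup_def)
    then obtain h0 where "h0 \<in> H0" "h0 \<noteq> 0" using H0(3) by blast
    thus ?thesis using H0(1,2) by blast
  qed
  hence "\<forall>n. \<exists>p. is_subgroup (fst p) \<and> fst p \<subseteq> U n \<and> snd p \<in> fst p \<and> snd p \<noteq> 0" by simp
  from choice[OF this] obtain Q where Q: "\<forall>n. is_subgroup (fst (Q n)) \<and> fst (Q n) \<subseteq> U n \<and> snd (Q n) \<in> fst (Q n) \<and> snd (Q n) \<noteq> 0"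
    by blast
  define H where "H n = fst (Q n)" for n
  define h where "h n = snd (Q n)" for n
  have Hh: "\<And>n. is_subgroup (H n)" "\<And>n. H n \<subseteq> U n" "\<And>n. h n \<in> H n" "\<And>n. h n \<noteq> 0"
    using Q unfolding H_def h_def by blast+
  define A where "A = range h"
  have "absolutely_productive A"
    unfolding absolutely_productive_def hyper_multipliable_def
  proof (intro allI impI)
    fix g :: "nat \<Rightarrow> 'a" and m :: "nat \<Rightarrow> int"
    assume g: "inj g \<and> range g \<subseteq> A"
    define j where "j k = (SOME n. h n = g k)" for k
    have hj: "h (j k) = g k" for k
    proof -
      have "g k \<in> range h" using g unfolding A_def by blast
      then obtain n0 where "g k = h n0" by (rule rangeE)
      hence "\<exists>n. h n = g k" by (intro exI[of _ n0]) simp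
      thus ?thesis unfolding j_def by (rule someI_ex)
    qed
    have "inj j"
    proof (rule injI)
      fix a b assume "j a = j b"
      hence "g a = g b" using hj[of a] hj[of b] by simp
      thus "a = b" using g by (auto dest: injD)
    qed
    moreover have tt: "zpow (m k) (g k) \<in> U (j k)" for k
      using zpow_in_subgroup[OF Hh(1)[of "j k"] Hh(3)[of "j k"], where m="m k"] Hh(2)[of "j k"] hj[of k] by auto
    ultimately show "convergent (oprod (\<lambda>k. zpow (m k) (g k)))"
      by (intro core[where U=U and K=K and j=j and t="\<lambda>k. zpow (m k) (g k)", OF U0 U3 Ud VK(2) UK]) (simp_all add: tt)
  qed
  moreover have "infinite A"
  proof
    assume fin: "finite A"
    have ne: "(\<lambda>a. dist a 0) ` A \<noteq> {}" unfolding A_def by auto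
    define D where "D = Min ((\<lambda>a. dist a 0) ` A)"
    have "D \<in> (\<lambda>a. dist a 0) ` A" unfolding D_def using fin ne by (intro Min_in) auto
    hence Dpos: "D > 0" using Hh(4) unfolding A_def by auto
    then obtain n where n: "n > 0" "inverse (real n) < D" using ex_inverse_of_nat_less by blast
    have "dist (h n) 0 < 1 / real (Suc n)" using Ud[OF U0 subsetD[OF Hh(2) Hh(3)], of n] by simp
    also have "\<dots> < D" using n
    proof -
      have "real n < real (Suc n)" by simp
      hence "1 / real (Suc n) < 1 / real n" using n(1) by (intro divide_strict_left_mono) auto
      thus ?thesis using n(2) by (simp add: divide_inverse)
    qed
    finally have "dist (h n) 0 < D" .
    moreover have "D \<le> dist (h n) 0" unfolding D_def A_def using fin by (intro Min_le) (auto simp: A_def)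
    ultimately show False by simp
  qed
  ultimately show False using tap unfolding TAP_def by blast
qed

theorem corollary5p6:
  assumes "locally_compact_space (euclidean :: 'a::{topological_group_add, metric_space} topology)"
  shows "NSS TYPE('a) \<longleftrightarrow> TAP TYPE('a)"
  using nss_tap tap_nss[OF assms] by blast

end
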